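(* Let $n,p\ge1$ be integers, let $\mathbf{A}^{p+1}_{n+1}$ be as defined in the context, and let $k=\max\{n+1,p\}$. Then $k.a\vee k.(\sim a)=\top$ for every $a\in A$, whereas there exists $a\in A$ with $n.a\vee n.(\sim a)\ne\top$. That is, $\mathbf{A}^{p+1}_{n+1}$ satisfies the identity $k.x\vee k.\neg x\approx\top$ but not the identity $n.x\vee n.\neg x\approx\top$.
   Context: Order $\mathbb{Z}\times\mathbb{Z}$ lexicographically: $(m,r)\preccurlyeq(k,s)$ iff $m<k$, or $m=k$ and $r\le s$; addition/subtraction of pairs is componentwise, and $\min,\max$ of pairs refer to $\preccurlyeq$. For an integer $n\ge1$ let $L^\omega_{n+1}=\{(m,r)\in\mathbb{Z}^2:(0,0)\preccurlyeq(m,r)\preccurlyeq(n,0)\}$ with $x\ast y=\max\{(0,0),x+y-(n,0)\}$ and $x\to y=\min\{(n,0),(n,0)-x+y\}$. For an integer $p\ge1$ let $L_{p+1}=\{0,1,\dots,p\}$ with $\alpha\ast\beta=\max\{0,\alpha+\beta-p\}$. Define $$A=A^{p+1}_{n+1}=\{\langle(m,r),\alpha\rangle:(m,r)\in L^\omega_{n+1},\ \alpha\in\{0,p\}\}\cup\{\langle(m,r),\alpha\rangle:(0,0)\preccurlyeq(m,r)\preccurlyeq(n-1,0),\ 0<\alpha<p\}.$$ Order: $\langle(m,r),\alpha\rangle\le\langle(k,s),\beta\rangle$ iff one of: (o1) $\alpha\neq0$, $\alpha\le\beta$ and $(m,r)\preccurlyeq(k,s)$; (o2) $\alpha=\beta=0$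 and $(k,s)\preccurlyeq(m,r)$; (o3) $\alpha=0$, $\beta\ne0$ and $(n-1,0)\preccurlyeq(m+k,r+s)$. $\wedge,\vee$ denote meet and join for $\le$. Put $\bot=\langle(n,0),0\rangle$, $\top=\langle(n,0),p\rangle$. For $a=\langle(m,r),\alpha\rangle$, $b=\langle(k,s),\beta\rangle\in A$ define $a\odot b$ by: (P1) if $\alpha,\beta\ge1$ and $\alpha+\beta>p$: $a\odot b=\langle(m,r)\ast(k,s),\alpha+\beta-p\rangle$; (P2) if $\alpha,\beta\ge1$ and $\alpha+\beta\le p$: $a\odot b=\langle\min\{(n,0),(2n-(m+k+1),-(r+s))\},0\rangle$; (P3) if $\alpha\ge1$, $\beta=0$: $a\odot b=\langle(m,r)\to(k,s),0\rangle$, and if $\alpha=0$, $\beta\ge1$: $a\odot b=\langle(k,s)\to(m,r),0\rangle$; (P4) if $\alpha=\beta=0$: $a\odot b=\langle\min\{(n,0),(m+k+1,r+s)\},0\rangle$. Define $\sim\langle(m,r),\alpha\rangle=\langle(m,r),p-\alpha\rangle$ if $\alpha\in\{0,p\}$, and $\sim\langle(m,r),\alpha\rangle=\langle(n-1-m,-r),p-\alpha\rangle$ if $0<\alpha<p$. Define $a\Rightarrow b=\sim(a\odot\sim b)$ (so $\sim a=a\Rightarrow\bot$, interpreting $\neg x=x\to\bot$). The algebra $\mathbf{A}^{p+1}_{n+1}$ is $\langle A;\odot,\Rightarrow,\wedge,\vee,\bot,\top\rangle$. Terms: $a^0=\top$, $a^{k+1}=a\odot a^k$; $a\oplus b=\sim(\sim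 a\odot\sim b)$; $0.a=\bot$, $(k+1).a=a\oplus k.a$. *)

theory Defs
  imports Main
begin

text \<open>Elements of A^{p+1}_{n+1} are encoded as ((m,r),alpha) with integers m r alpha.
  The parameters n p are natural numbers (assumed >= 1 in the theorem).\<close>

type_synonym elt = "(int \<times> int) \<times> int"

definition lexle :: "int \<times> int \<Rightarrow> int \<times> int \<Rightarrow> bool" where
  "lexle x y \<longleftrightarrow> fst x < fst y \<or> (fst x = fst y \<and> snd x \<le> snd y)"

definition lmin :: "int \<times> int \<Rightarrow> int \<times> int \<Rightarrow> int \<times> int" where
  "lmin x y = (if lexle x y then x else y)"

definition lmax :: "int \<times> int \<Rightarrow> int \<times> int \<Rightarrow> int \<times> int" where
  "lmax x y = (if lexle x y then y else x)"

definition Lw :: "nat \<Rightarrow> (int \<times> int) set" where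
  "Lw n = {x. lexle (0,0) x \<and> lexle x (int n, 0)}"

definition lstar :: "nat \<Rightarrow> int \<times> int \<Rightarrow> int \<times> int \<Rightarrow> int \<times> int" where
  "lstar n x y = lmax (0,0) (fst x + fst y - int n, snd x + snd y)"

definition limp :: "nat \<Rightarrow> int \<times> int \<Rightarrow> int \<times> int \<Rightarrow> int \<times> int" where
  "limp n x y = lmin (int n, 0) (int n - fst x + fst y, - snd x + snd y)"

definition carrierA :: "nat \<Rightarrow> nat \<Rightarrow> elt set" where
  "carrierA n p =
     {((m,r),\<alpha>). (m,r) \<in> Lw n \<and> (\<alpha> = 0 \<or> \<alpha> = int p)}
   \<union> {((m,r),\<alpha>). lexle (0,0) (m,r) \<and> lexle (m,r) (int n - 1, 0) \<and> 0 < \<alpha> \<and> \<alpha> < int p}"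

definition leA :: "nat \<Rightarrow> elt \<Rightarrow> elt \<Rightarrow> bool" where
  "leA n a b = (case a of ((m,r),\<alpha>) \<Rightarrow> case b of ((k,s),\<beta>) \<Rightarrow>
      (\<alpha> \<noteq> 0 \<and> \<alpha> \<le> \<beta> \<and> lexle (m,r) (k,s))
    \<or> (\<alpha> = 0 \<and> \<beta> = 0 \<and> lexle (k,s) (m,r))
    \<or> (\<alpha> = 0 \<and> \<beta> \<noteq> 0 \<and> lexle (int n - 1, 0) (m + k, r + s)))"

definition joinA :: "nat \<Rightarrow> nat \<Rightarrow> elt \<Rightarrow> elt \<Rightarrow> elt" where
  "joinA n p a b = (THE c. c \<in> carrierA n p \<and> leA n a c \<and> leA n b c \<and>
      (\<forall>d\<in>carrierA n p. leA n a d \<and> leA n b d \<longrightarrow> leA n c d))"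

definition botA :: "nat \<Rightarrow> nat \<Rightarrow> elt" where
  "botA n p = ((int n, 0), 0)"

definition topA :: "nat \<Rightarrow> nat \<Rightarrow> elt" where
  "topA n p = ((int n, 0), int p)"

definition odotA :: "nat \<Rightarrow> nat \<Rightarrow> elt \<Rightarrow> elt \<Rightarrow> elt" where
  "odotA n p a b = (case a of ((m,r),\<alpha>) \<Rightarrow> case b of ((k,s),\<beta>) \<Rightarrow>
     if 1 \<le> \<alpha> \<and> 1 \<le> \<beta> \<and> \<alpha> + \<beta> > int p then (lstar n (m,r) (k,s), \<alpha> + \<beta> - int p)
     else if 1 \<le> \<alpha> \<and> 1 \<le> \<beta> then
       (lmin (int n, 0) (2 * int n - (m + k + 1), - (r + s)), 0)
     else if 1 \<le> \<alpha> \<and> \<beta> = 0 then (limp n (m,r) (k,s), 0)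
     else if \<alpha> = 0 \<and> 1 \<le> \<beta> then (limp n (k,s) (m,r), 0)
     else (lmin (int n, 0) (m + k + 1, r + s), 0))"

definition negA :: "nat \<Rightarrow> nat \<Rightarrow> elt \<Rightarrow> elt" where
  "negA n p a = (case a of ((m,r),\<alpha>) \<Rightarrow>
     if \<alpha> = 0 \<or> \<alpha> = int p then ((m,r), int p - \<alpha>)
     else ((int n - 1 - m, - r), int p - \<alpha>))"

definition oplusA :: "nat \<Rightarrow> nat \<Rightarrow> elt \<Rightarrow> elt \<Rightarrow> elt" where
  "oplusA n p a b = negA n p (odotA n p (negA n p a) (negA n p b))"

fun nmulA :: "nat \<Rightarrow> nat \<Rightarrow> nat \<Rightarrow> elt \<Rightarrow> elt" where
  "nmulA n p 0 a = botA n p"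
| "nmulA n p (Suc k) a = oplusA n p a (nmulA n p k a)"

end

theory Submission
  imports Defs
begin

lemma capA:
  assumes "lexle (0,0) (m,r)" "lmin (N,0) (X,R) = (c,s)"
  shows "lmin (N,0) (m + c + 1, r + s) = lmin (N,0) (m + X + 1, r + R)"
  using assms by (auto simp: lmin_def lexle_def split: if_splits)

lemma capC:
  assumes "lexle (m,r) (N,0)" "lmax (0,0) (X,R) = (c,s)"
  shows "lmax (0,0) (m + c - N, r + s) = lmax (0,0) (m + X - N, r + R)"
  using assms by (auto simp: lmax_def lexle_def split: if_splits)

lemma lemA:
  assumes "(m,r) \<in> Lw n" "p \<ge> 1" "j \<ge> 1"
  shows "nmulA n p j ((m,r), int p) = (lmin (int n,0) (int j*m + int j - 1, int j*r), int p)"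
  using assms(3)
proof (induct j rule: nat_induct_at_least)
  case base
  then show ?case using assms(1,2)
    by (auto simp: oplusA_def negA_def odotA_def botA_def limp_def lmin_def lexle_def Lw_def)
next
  case (Suc j)
  have lx: "lexle (0,0) (m,r)" using assms(1) by (simp add: Lw_def)
  have e: "int (Suc j) * m + int (Suc j) - 1 = m + (int j * m + int j - 1) + 1" "int (Suc j) * r = r + int j * r"
    by (auto simp: algebra_simps)
  obtain c s where cs: "lmin (int n,0) (int j*m + int j - 1, int j*r) = (c,s)" by fastforce
    show ?case
    apply (simp only: nmulA.simps Suc.hyps e cs)
    using assms(2) capA[OF lx cs]
    by (simp add: oplusA_def negA_def odotA_def)
qed


lemma capA2:
  assumes "lexle (0,0) (m,r)" "lmin (N-1,0) (X,R) = (c,s)"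
  shows "lmin (N,0) (m + c + 1, r + s) = lmin (N,0) (m + X + 1, r + R)"
  using assms by (auto simp: lmin_def lexle_def split: if_splits)

lemma negmax:
  assumes "lmax (0,0) (K - a, - b) = (t,u)"
  shows "(K - t, - u) = lmin (K,0) (a,b)"
  using assms by (auto simp: lmin_def lmax_def lexle_def split: if_splits)

lemma lemC:
  assumes "(m,r) \<in> Lw n" "p \<ge> 1" "j \<ge> 1"
  shows "nmulA n p j ((m,r), 0) = (lmax (0,0) (int j*m - (int j - 1) * int n, int j*r), 0)"
  using assms(3)
proof (induct j rule: nat_induct_at_least)
  case base
  then show ?case using assms(1,2)
    by (auto simp: oplusA_def negA_def odotA_def botA_def lstar_def lmax_def lexle_def Lw_def)
next
  case (Suc j)
  have lx: "lexle (m,r) (int n, 0)" using assms(1) by (simp add: Lw_def)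
  have e: "int (Suc j) * m - (int (Suc j) - 1) * int n = m + (int j * m - (int j - 1) * int n) - int n" "int (Suc j) * r = r + int j * r"
    by (auto simp: algebra_simps)
  obtain c s where cs: "lmax (0,0) (int j * m - (int j - 1) * int n, int j*r) = (c,s)" by fastforce
  show ?case
    apply (simp only: nmulA.simps Suc.hyps e cs)
    using assms(2) capC[OF lx cs]
    by (simp add: oplusA_def negA_def odotA_def lstar_def)
qed

lemma lemB:
  assumes "lexle (0,0) (m,r)" "lexle (m,r) (int n - 1, 0)" "0 < \<beta>" "\<beta> < int p" "j \<ge> 1"
  shows "nmulA n p j ((m,r), \<beta>) = (if int j*\<beta> < int p
      then (lmin (int n - 1,0) (int j*m + int j - 1, int j*r), int j*\<beta>)
      else (lmin (int n,0) (int j*m + int j - 1, int j*r), int p))"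
  using assms(5)
proof (induct j rule: nat_induct_at_least)
  case base
  then show ?case using assms(1-4)
    by (auto simp: oplusA_def negA_def odotA_def botA_def lstar_def lmax_def lmin_def lexle_def)
next
  case (Suc j)
  have e: "int (Suc j) * m + int (Suc j) - 1 = m + (int j * m + int j - 1) + 1" "int (Suc j) * r = r + int j * r"
     "int (Suc j) * \<beta> = int j * \<beta> + \<beta>"
    by (auto simp: algebra_simps)
  have jb: "int j * \<beta> \<ge> \<beta>" using Suc(1) assms(3) by (simp add: mult_le_cancel_right1 )
  show ?case
  proof (cases "int j * \<beta> < int p")
    case True
    obtain c s where cs: "lmin (int n - 1,0) (int j*m + int j - 1, int j*r) = (c,s)" by fastforce
    show ?thesis
    proof (cases "int j * \<beta> + \<beta> < int p")
      case True2: True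
      obtain t u where tu: "lmax (0,0) (int n - 1 - (m + c + 1), - (r + s)) = (t,u)" by fastforce
      have 1: "(int n - 1 - t, - u) = lmin (int n - 1, 0) (m + c + 1, r + s)" using negmax[OF tu] .
      have 2: "lmin (int n - 1,0) (m + c + 1, r + s) = lmin (int n - 1,0) (m + (int j*m + int j - 1) + 1, r + int j*r)"
        using capA[OF assms(1) cs] .
      have 3: "lstar n (int n - 1 - m, - r) (int n - 1 - c, - s) = (t,u)"
        using tu by (simp add: lstar_def algebra_simps)
      show ?thesis
        apply (simp only: nmulA.simps Suc.hyps e if_P[OF True] cs)
        using True True2 jb assms(3,4) 1 2 3
        apply (simp add: oplusA_def negA_def odotA_def)
        using jb assms(3) by linarith
    next
      case False2: False
      have 2: "lmin (int n,0) (m + c + 1, r + s) = lmin (int n,0) (m + (int j*m + int j - 1) + 1, r + int j*r)"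
        using capA2[OF assms(1), of "int n"] cs by simp
      have 3: "2 * int n - (int n - 1 - m + (int n - 1 - c) + 1) = m + c + 1" "- (- r + - s) = r + s" by simp_all
      show ?thesis
        apply (simp only: nmulA.simps Suc.hyps e if_P[OF True] cs)
        using True False2 jb assms(3,4) 2 3
        apply (simp add: oplusA_def negA_def odotA_def)
        using 2 by (simp add: ac_simps)
    qed
  next
    case False
    obtain c s where cs: "lmin (int n,0) (int j*m + int j - 1, int j*r) = (c,s)" by fastforce
    have 2: "lmin (int n,0) (m + c + 1, r + s) = lmin (int n,0) (m + (int j*m + int j - 1) + 1, r + int j*r)"
        using capA[OF assms(1) cs] .
    have 3: "limp n (int n - 1 - m, - r) (c,s) = lmin (int n,0) (m + c + 1, r + s)"
      by (simp add: limp_def algebra_simps)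
    show ?thesis
      apply (simp only: nmulA.simps Suc.hyps e if_not_P[OF False] cs)
      using False jb assms(3,4) 2 3
      by (simp add: oplusA_def negA_def odotA_def)
  qed
qed

lemma carrier_nonneg: "((m,r),\<alpha>) \<in> carrierA n p \<Longrightarrow> 0 \<le> \<alpha>"
  by (auto simp: carrierA_def)

lemma leA_antisym:
  assumes "x \<in> carrierA n p" "y \<in> carrierA n p" "leA n x y" "leA n y x"
  shows "x = y"
proof -
  obtain m r \<alpha> where x: "x = ((m,r),\<alpha>)" by (metis prod.collapse)
  obtain k s \<beta> where y: "y = ((k,s),\<beta>)" by (metis prod.collapse)
  have "0 \<le> \<alpha>" "0 \<le> \<beta>" using assms(1,2) carrier_nonneg x y by blast+
  then show ?thesis using assms(3,4) unfolding x y
    by (auto simp: leA_def lexle_def)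
qed

lemma top_carrier: "topA n p \<in> carrierA n p"
  by (auto simp: topA_def carrierA_def Lw_def lexle_def)

lemma top_le: "p \<ge> 1 \<Longrightarrow> c \<in> carrierA n p \<Longrightarrow> leA n (topA n p) c \<Longrightarrow> c = topA n p"
  by (auto simp: topA_def carrierA_def Lw_def lexle_def leA_def)

lemma join_top1:
  assumes "p \<ge> 1" "leA n x (topA n p)"
  shows "joinA n p (topA n p) x = topA n p"
  unfolding joinA_def
proof (rule the_equality)
  show "topA n p \<in> carrierA n p \<and> leA n (topA n p) (topA n p) \<and> leA n x (topA n p) \<and>
    (\<forall>d\<in>carrierA n p. leA n (topA n p) d \<and> leA n x d \<longrightarrow> leA n (topA n p) d)"
    using assms top_carrier by (auto simp: topA_def leA_def lexle_def)
next
  fix c assume "c \<in> carrierA n p \<and> leA n (topA n p) c \<and> leA n x c \<and>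
    (\<forall>d\<in>carrierA n p. leA n (topA n p) d \<and> leA n x d \<longrightarrow> leA n c d)"
  then show "c = topA n p" using top_le assms(1) by blast
qed

lemma join_top2:
  assumes "p \<ge> 1" "leA n x (topA n p)"
  shows "joinA n p x (topA n p) = topA n p"
  unfolding joinA_def
proof (rule the_equality)
  show "topA n p \<in> carrierA n p \<and> leA n x (topA n p) \<and> leA n (topA n p) (topA n p) \<and>
    (\<forall>d\<in>carrierA n p. leA n x d \<and> leA n (topA n p) d \<longrightarrow> leA n (topA n p) d)"
    using assms top_carrier by (auto simp: topA_def leA_def lexle_def)
next
  fix c assume "c \<in> carrierA n p \<and> leA n x c \<and> leA n (topA n p) c \<and>
    (\<forall>d\<in>carrierA n p. leA n x d \<and> leA n (topA n p) d \<longrightarrow> leA n c d)"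
  then show "c = topA n p" using top_le assms(1) by blast
qed

lemma topcap:
  assumes "lexle (0,0) (m,r)" "k \<ge> n + 1"
  shows "lmin (int n,0) (int k*m + int k - 1, int k*r) = (int n, 0)"
proof (cases "m = 0")
  case True
  then have "r \<ge> 0" using assms(1) by (simp add: lexle_def)
  then have "int k * r \<ge> 0" by simp
  then show ?thesis using True assms(2) by (auto simp: lmin_def lexle_def)
next
  case False
  then have "m \<ge> 1" using assms(1) by (simp add: lexle_def)
  then have "int k * m \<ge> int k" by (simp add: mult_le_cancel_left1)
  then have "int k * m + int k - 1 > int n" using assms(2) by linarith
  then show ?thesis by (auto simp: lmin_def lexle_def)
qed

lemma lmax_ge: "lmax (0,0) z = (c,s) \<Longrightarrow> 0 \<le> c"
  by (auto simp: lmax_def lexle_def split: if_splits)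

lemma le_top_zero:
  assumes "lmax (0,0) z = (c,s)" "p \<ge> 1"
  shows "leA n ((c,s),0) (topA n p)"
  using lmax_ge[OF assms(1)] assms(2) by (auto simp: leA_def topA_def lexle_def)

theorem mainTheorem16:
  fixes n p :: nat
  assumes "n \<ge> 1" and "p \<ge> 1"
  shows "(\<forall>a\<in>carrierA n p.
            joinA n p (nmulA n p (max (n+1) p) a) (nmulA n p (max (n+1) p) (negA n p a)) = topA n p)
       \<and> (\<exists>a\<in>carrierA n p.
            joinA n p (nmulA n p n a) (nmulA n p n (negA n p a)) \<noteq> topA n p)"
proof
  define k where "k = max (n+1) p"
  have k1: "k \<ge> n + 1" "k \<ge> p" "k \<ge> 1" unfolding k_def by auto
  show "\<forall>a\<in>carrierA n p.
            joinA n p (nmulA n p (max (n+1) p) a) (nmulA n p (max (n+1) p) (negA n p a)) = topA n p"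
  proof
    fix a assume aC: "a \<in> carrierA n p"
    obtain m r \<alpha> where a: "a = ((m,r),\<alpha>)" by (metis prod.collapse)
    have cases: "((m,r) \<in> Lw n \<and> (\<alpha> = 0 \<or> \<alpha> = int p)) \<or>
       (lexle (0,0) (m,r) \<and> lexle (m,r) (int n - 1, 0) \<and> 0 < \<alpha> \<and> \<alpha> < int p)"
      using aC a by (auto simp: carrierA_def)
    have TOP: "topA n p = ((int n, 0), int p)" by (simp add: topA_def)
    show "joinA n p (nmulA n p (max (n+1) p) a) (nmulA n p (max (n+1) p) (negA n p a)) = topA n p"
    proof -
      let ?G = "joinA n p (nmulA n p k a) (nmulA n p k (negA n p a)) = topA n p"
      { assume L: "(m,r) \<in> Lw n" and z: "\<alpha> = 0"
        have l0: "lexle (0,0) (m,r)" using L by (simp add: Lw_def)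
        have na: "negA n p a = ((m,r), int p)" using a z by (simp add: negA_def)
        have 1: "nmulA n p k (negA n p a) = topA n p"
          unfolding na lemA[OF L assms(2) k1(3)] topcap[OF l0 k1(1)] TOP ..
        obtain c s where cs: "lmax (0,0) (int k*m - (int k - 1) * int n, int k*r) = (c,s)" by fastforce
        have 2: "nmulA n p k a = ((c,s),0)" unfolding a z lemC[OF L assms(2) k1(3)] cs ..
        have ?G unfolding 1 2 by (rule join_top2[OF assms(2) le_top_zero[OF cs assms(2)]])
      } moreover
      { assume L: "(m,r) \<in> Lw n" and z: "\<alpha> = int p"
        have l0: "lexle (0,0) (m,r)" using L by (simp add: Lw_def)
        have na: "negA n p a = ((m,r), 0)" using a z by (simp add: negA_def)
        have 1: "nmulA n p k a = topA n p"
          unfolding a z lemA[OF L assms(2) k1(3)] topcap[OF l0 k1(1)] TOP ..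
        obtain c s where cs: "lmax (0,0) (int k*m - (int k - 1) * int n, int k*r) = (c,s)" by fastforce
        have 2: "nmulA n p k (negA n p a) = ((c,s),0)" unfolding na lemC[OF L assms(2) k1(3)] cs ..
        have ?G unfolding 1 2 by (rule join_top1[OF assms(2) le_top_zero[OF cs assms(2)]])
      } moreover
      { assume l0: "lexle (0,0) (m,r)" and l1: "lexle (m,r) (int n - 1, 0)" and b0: "0 < \<alpha>" and b1: "\<alpha> < int p"
        have kb: "int k * \<alpha> \<ge> int p" "int k * (int p - \<alpha>) \<ge> int p"
        proof -
          have "int k * \<alpha> \<ge> int k" using b0 by (simp add: mult_le_cancel_left1)
          then show "int k * \<alpha> \<ge> int p" using k1(2) by linarith
          have "int k * (int p - \<alpha>) \<ge> int k" using b1 by (simp add: mult_le_cancel_left1)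
          then show "int k * (int p - \<alpha>) \<ge> int p" using k1(2) by linarith
        qed
        have na: "negA n p a = ((int n - 1 - m, - r), int p - \<alpha>)" using a b0 b1 by (simp add: negA_def)
        have l0': "lexle (0,0) (int n - 1 - m, - r)" using l1 by (auto simp: lexle_def)
        have l1': "lexle (int n - 1 - m, - r) (int n - 1, 0)" using l0 by (auto simp: lexle_def)
        have 1: "nmulA n p k a = topA n p"
          unfolding a lemB[OF l0 l1 b0 b1 k1(3)] using kb(1) topcap[OF l0 k1(1)] TOP by simp
        have b0': "0 < int p - \<alpha>" and b1': "int p - \<alpha> < int p" using b0 b1 by auto
        have 2: "nmulA n p k (negA n p a) = topA n p"
          unfolding na lemB[OF l0' l1' b0' b1' k1(3)] using kb(2) topcap[OF l0' k1(1)] TOP by simp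
        have ?G unfolding 1 2
          by (rule join_top1[OF assms(2)]) (auto simp: topA_def leA_def lexle_def)
      }
      ultimately have ?G using cases by blast
      then show ?thesis by (simp add: k_def)
    qed
  qed
next
  define a :: elt where "a = ((0,0),0)"
  define c0 :: elt where "c0 = ((int n - 1, 0), int p)"
  have aC: "a \<in> carrierA n p" unfolding a_def by (auto simp: carrierA_def Lw_def lexle_def)
  have c0C: "c0 \<in> carrierA n p" unfolding c0_def using assms by (auto simp: carrierA_def Lw_def lexle_def)
  have L0: "(0,0) \<in> Lw n" by (auto simp: Lw_def lexle_def)
  have nn: "(int n - 1) * int n \<ge> 0" using assms(1) by simp
  have 1: "nmulA n p n a = a"
    unfolding a_def lemC[OF L0 assms(2) assms(1)] using nn by (auto simp: lmax_def lexle_def)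
  have na: "negA n p a = ((0,0), int p)" unfolding a_def by (simp add: negA_def)
  have 2: "nmulA n p n (negA n p a) = c0"
    unfolding na lemA[OF L0 assms(2) assms(1)] c0_def by (auto simp: lmin_def lexle_def)
  have ac0: "leA n a c0" unfolding a_def c0_def using assms by (auto simp: leA_def lexle_def)
  have c0c0: "leA n c0 c0" unfolding c0_def using assms by (auto simp: leA_def lexle_def)
  have J: "joinA n p a c0 = c0"
    unfolding joinA_def
  proof (rule the_equality)
    show "c0 \<in> carrierA n p \<and> leA n a c0 \<and> leA n c0 c0 \<and>
      (\<forall>d\<in>carrierA n p. leA n a d \<and> leA n c0 d \<longrightarrow> leA n c0 d)"
      using c0C ac0 c0c0 by blast
  next
    fix c assume H: "c \<in> carrierA n p \<and> leA n a c \<and> leA n c0 c \<and>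
      (\<forall>d\<in>carrierA n p. leA n a d \<and> leA n c0 d \<longrightarrow> leA n c d)"
    then have "leA n c c0" using c0C ac0 c0c0 by blast
    then show "c = c0" using H leA_antisym c0C by blast
  qed
  have "c0 \<noteq> topA n p" unfolding c0_def topA_def by simp
  then show "\<exists>a\<in>carrierA n p. joinA n p (nmulA n p n a) (nmulA n p n (negA n p a)) \<noteq> topA n p"
    using aC 1 2 J by metis
qed

end
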